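(* Let $\mathcal{G}$ be a fractionally $\mathrm{tree}\text{-}\alpha$-fragile class of graphs and let $c\in\mathbb{N}$ be arbitrary. Then there exists $k\in\mathbb{N}$ such that every $G\in\mathcal{G}$ with $|V(G)|\ge k$ satisfies $s\text{-}\alpha(G)<|V(G)|/c$. In particular, every fractionally $\mathrm{tree}\text{-}\alpha$-fragile class has separators of sublinear independence number.
   Context: $\alpha$ denotes independence number. The tree-independence number $\mathrm{tree}\text{-}\alpha(G)$ is the minimum over tree decompositions $(T,\{X_t\})$ of $G$ (tree $T$, bags covering vertices and edges, each vertex's bags forming a subtree) of $\max_t\alpha(G[X_t])$. For $\beta\le1$, a $\beta$-general cover of $G$ is a multiset $\mathcal{C}$ of subsets of $V(G)$ with each vertex in at least $\beta|\mathcal{C}|$ members. A class $\mathcal{G}$ is fractionally $\mathrm{tree}\text{-}\alpha$-fragile if there is $f\colon\mathbb{N}\to\mathbb{N}$ such that for every $r\in\mathbb{N}$ every $G\in\mathcal{G}$ has a $(1-1/r)$-general cover $\mathcal{C}$ with $\mathrm{tree}\text{-}\alpha(G[C])\le f(r)$ for all $C\in\mathcal{C}$. A separation of $G$ is a pair $(A,B)$ of vertex sets with $A\cup B=V(G)$ and no edge between $A\setminus B$ and $B\setminus A$; it is balanced if $|A\setminus B|,|B\setminus A|\le 2|V(G)|/3$; its independence number is $\alpha(G[A\cap B])$. $s\text{-}\alpha(G)$ is the minimum independence number of a balanced separation of $G$. For a class $\mathcal{G}$, $s\text{-}\alpha_{\mathcal{G}}(n)=\max\{s\text{-}\alpha(G):G\in\mathcal{G},|V(G)|\le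 n\}$, and $\mathcal{G}$ has separators of sublinear independence number if $s\text{-}\alpha_{\mathcal{G}}(n)/n\to0$. *)

theory Defs
  imports Complex_Main "HOL-Library.Multiset"
begin

type_synonym 'a graph = "'a set \<times> ('a \<times> 'a) set"

definition verts :: "'a graph \<Rightarrow> 'a set" where "verts G = fst G"
definition edges :: "'a graph \<Rightarrow> ('a \<times> 'a) set" where "edges G = snd G"

definition is_graph :: "'a graph \<Rightarrow> bool" where
  "is_graph G \<longleftrightarrow> finite (verts G) \<and> edges G \<subseteq> verts G \<times> verts G
     \<and> sym (edges G) \<and> irrefl (edges G)"

definition induced :: "'a graph \<Rightarrow> 'a set \<Rightarrow> 'a graph" where
  "induced G S = (verts G \<inter> S, edges G \<inter> (S \<times> S))"

definition independent :: "'a graph \<Rightarrow> 'a set \<Rightarrow> bool" where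
  "independent G A \<longleftrightarrow> A \<subseteq> verts G \<and> (\<forall>u\<in>A. \<forall>v\<in>A. (u, v) \<notin> edges G)"

definition alpha :: "'a graph \<Rightarrow> nat" where
  "alpha G = Max {card A | A. independent G A}"

definition connected_on :: "nat set \<Rightarrow> (nat \<times> nat) set \<Rightarrow> bool" where
  "connected_on I F \<longleftrightarrow> (\<forall>s\<in>I. \<forall>t\<in>I. (s, t) \<in> (F \<inter> (I \<times> I))\<^sup>*)"

definition is_tree :: "nat set \<Rightarrow> (nat \<times> nat) set \<Rightarrow> bool" where
  "is_tree I F \<longleftrightarrow> finite I \<and> I \<noteq> {} \<and> F \<subseteq> I \<times> I \<and> sym F \<and> irrefl F
     \<and> connected_on I F \<and> card {{s, t} | s t. (s, t) \<in> F} = card I - 1"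

definition tree_decomp :: "'a graph \<Rightarrow> nat set \<Rightarrow> (nat \<times> nat) set \<Rightarrow> (nat \<Rightarrow> 'a set) \<Rightarrow> bool" where
  "tree_decomp G I F X \<longleftrightarrow> is_tree I F
     \<and> (\<forall>t\<in>I. X t \<subseteq> verts G)
     \<and> (\<forall>v\<in>verts G. \<exists>t\<in>I. v \<in> X t)
     \<and> (\<forall>(u, v)\<in>edges G. \<exists>t\<in>I. u \<in> X t \<and> v \<in> X t)
     \<and> (\<forall>v\<in>verts G. connected_on {t\<in>I. v \<in> X t} F)"

definition tree_alpha :: "'a graph \<Rightarrow> nat" where
  "tree_alpha G = Inf {Max ((\<lambda>t. alpha (induced G (X t))) ` I) | I F X. tree_decomp G I F X}"

definition general_cover :: "'a graph \<Rightarrow> real \<Rightarrow> 'a set multiset \<Rightarrow> bool" where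
  "general_cover G \<beta> \<C> \<longleftrightarrow> \<C> \<noteq> {#} \<and> (\<forall>C\<in>#\<C>. C \<subseteq> verts G)
     \<and> (\<forall>v\<in>verts G. real (size (filter_mset (\<lambda>C. v \<in> C) \<C>)) \<ge> \<beta> * real (size \<C>))"

definition frac_tree_alpha_fragile :: "'a graph set \<Rightarrow> bool" where
  "frac_tree_alpha_fragile \<G> \<longleftrightarrow> (\<exists>f :: nat \<Rightarrow> nat. \<forall>r::nat. r \<ge> 1 \<longrightarrow>
     (\<forall>G\<in>\<G>. \<exists>\<C>. general_cover G (1 - 1 / real r) \<C>
        \<and> (\<forall>C\<in>#\<C>. tree_alpha (induced G C) \<le> f r)))"

definition separation :: "'a graph \<Rightarrow> 'a set \<Rightarrow> 'a set \<Rightarrow> bool" where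
  "separation G A B \<longleftrightarrow> A \<union> B = verts G
     \<and> (\<forall>u\<in>A - B. \<forall>v\<in>B - A. (u, v) \<notin> edges G)"

definition balanced_separation :: "'a graph \<Rightarrow> 'a set \<Rightarrow> 'a set \<Rightarrow> bool" where
  "balanced_separation G A B \<longleftrightarrow> separation G A B
     \<and> real (card (A - B)) \<le> 2 * real (card (verts G)) / 3
     \<and> real (card (B - A)) \<le> 2 * real (card (verts G)) / 3"

definition s_alpha :: "'a graph \<Rightarrow> nat" where
  "s_alpha G = Inf {alpha (induced G (A \<inter> B)) | A B. balanced_separation G A B}"

definition s_alpha_class :: "'a graph set \<Rightarrow> nat \<Rightarrow> nat" where
  "s_alpha_class \<G> n = Sup {s_alpha G | G. G \<in> \<G> \<and> card (verts G) \<le> n}"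

definition sublinear_sep_alpha :: "'a graph set \<Rightarrow> bool" where
  "sublinear_sep_alpha \<G> \<longleftrightarrow> ((\<lambda>n. real (s_alpha_class \<G> n) / real n) \<longlonglongrightarrow> 0)"

end

theory Submission
  imports Defs
begin


lemma avoid_leaf:
  assumes l1: "\<forall>x. (l,x) \<in> R \<longrightarrow> x = p" and l2: "\<forall>x. (x,l) \<in> R \<longrightarrow> x = p"
    and pl: "p \<noteq> l" and path: "(s,x) \<in> R\<^sup>*" and sl: "s \<noteq> l"
  shows "(x \<noteq> l \<longrightarrow> (s,x) \<in> (R \<inter> (-{l}) \<times> (-{l}))\<^sup>*) \<and> (x = l \<longrightarrow> (s,p) \<in> (R \<inter> (-{l}) \<times> (-{l}))\<^sup>*)"
  using path
proof (induction x rule: rtrancl_induct)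
  case base
  then show ?case using sl by auto
next
  case (step y z)
  show ?case
  proof (cases "y = l")
    case True
    then have "z = p" using l1 step.hyps(2) by auto
    then show ?thesis using step.IH True pl by auto
  next
    case False
    then have yy: "(s,y) \<in> (R \<inter> (-{l}) \<times> (-{l}))\<^sup>*" using step.IH by auto
    show ?thesis
    proof (cases "z = l")
      case True
      then have "y = p" using l2 step.hyps(2) by auto
      then show ?thesis using yy True by auto
    next
      case False
      then have "(y,z) \<in> R \<inter> (-{l}) \<times> (-{l})" using step.hyps(2) \<open>y \<noteq> l\<close> by auto
      then show ?thesis using yy False by (meson rtrancl.rtrancl_into_rtrancl)
    qed
  qed
qed

definition nbr :: "(nat \<times> nat) set \<Rightarrow> nat \<Rightarrow> nat set" where
  "nbr F s = {t. (s,t) \<in> F}"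

lemma card_F_double:
  assumes "finite F" "sym F" "irrefl F"
  shows "card F = 2 * card {{s, t} | s t. (s, t) \<in> F}"
proof -
  let ?D = "{{s, t} | s t. (s, t) \<in> F}"
  let ?fib = "\<lambda>d. {(s,t). (s,t) \<in> F \<and> {s,t} = d}"
  have D_fin: "finite ?D"
  proof -
    have "?D = (\<lambda>(s,t). {s,t}) ` F" by auto
    then show ?thesis using assms(1) by simp
  qed
  have F_eq: "F = (\<Union>d\<in>?D. ?fib d)" by auto
  have fib2: "card (?fib d) = 2" if dD: "d \<in> ?D" for d
  proof -
    obtain a b where ab: "(a,b) \<in> F" "d = {a,b}" using dD by blast
    have "a \<noteq> b" using ab assms(3) unfolding irrefl_def by auto
    have "(b,a) \<in> F" using ab assms(2) unfolding sym_def by auto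
    have "?fib d = {(a,b),(b,a)}" using ab \<open>(b,a) \<in> F\<close> by (auto simp: doubleton_eq_iff)
    then show ?thesis using \<open>a \<noteq> b\<close> by auto
  qed
  have "card F = (\<Sum>d\<in>?D. card (?fib d))"
    apply (subst F_eq)
    apply (rule card_UN_disjoint[OF D_fin])
    using assms(1) by (auto intro: finite_subset)
  also have "\<dots> = (\<Sum>d\<in>?D. 2)" using fib2 by (intro sum.cong) auto
  finally show ?thesis by simp
qed

lemma tree_leaf:
  assumes T: "is_tree I F" and c2: "card I \<ge> 2"
  shows "\<exists>l\<in>I. \<exists>p\<in>I. nbr F l = {p}"
proof (rule ccontr)
  assume na: "\<not> ?thesis"
  have fin: "finite I" and FI: "F \<subseteq> I \<times> I" and sy: "sym F" and ir: "irrefl F"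
    and con: "connected_on I F" and cnt: "card {{s, t} | s t. (s, t) \<in> F} = card I - 1"
    using T unfolding is_tree_def by auto
  have finF: "finite F" using FI fin by (meson finite_SigmaI finite_subset)
  have nbrI: "nbr F s \<subseteq> I" for s using FI unfolding nbr_def by auto
  have ge2: "card (nbr F s) \<ge> 2" if "s \<in> I" for s
  proof -
    have "I - {s} \<noteq> {}"
    proof
      assume "I - {s} = {}"
      then have "I \<subseteq> {s}" by auto
      then have "card I \<le> 1" using card_mono[of "{s}" I] by auto
      then show False using c2 by simp
    qed
    then obtain t where "t \<in> I" "t \<noteq> s" by auto
    then have "(s,t) \<in> (F \<inter> I \<times> I)\<^sup>*" using con that unfolding connected_on_def by auto
    then have "(s,t) \<in> (F \<inter> I \<times> I)\<^sup>+" using \<open>t \<noteq> s\<close> rtrancl_eq_or_trancl by metis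
    then obtain y where "(s,y) \<in> F" by (meson IntD1 tranclD)
    then have ne: "nbr F s \<noteq> {}" unfolding nbr_def by auto
    have fn: "finite (nbr F s)" using nbrI fin by (meson finite_subset)
    have "\<not> (\<exists>p. nbr F s = {p})"
    proof
      assume "\<exists>p. nbr F s = {p}"
      then obtain p where "nbr F s = {p}" by auto
      then show False using na that nbrI by blast
    qed
    then have "card (nbr F s) \<noteq> 1" using card_1_singletonE by metis
    moreover have "card (nbr F s) \<noteq> 0" using ne fn by simp
    ultimately show ?thesis by linarith
  qed
  have "F = Sigma I (nbr F)" using FI unfolding nbr_def by auto
  then have "card F = (\<Sum>s\<in>I. card (nbr F s))"
    using fin nbrI by (metis card_SigmaI finite_subset)
  also have "\<dots> \<ge> (\<Sum>s\<in>I. 2)" using ge2 by (intro sum_mono) auto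
  finally have "card F \<ge> 2 * card I" by simp
  moreover have "card F = 2 * (card I - 1)" using card_F_double[OF finF sy ir] cnt by simp
  ultimately show False using c2 by linarith
qed


lemma leaf_facts:
  assumes T: "is_tree I F" and lf: "nbr F l = {p}"
  shows "\<forall>x. (l,x) \<in> F \<longrightarrow> x = p" "\<forall>x. (x,l) \<in> F \<longrightarrow> x = p" "p \<noteq> l" "(l,p) \<in> F"
proof -
  have sy: "sym F" and ir: "irrefl F" using T unfolding is_tree_def by auto
  show 1: "\<forall>x. (l,x) \<in> F \<longrightarrow> x = p" using lf unfolding nbr_def by auto
  show "\<forall>x. (x,l) \<in> F \<longrightarrow> x = p"
  proof (intro allI impI)
    fix x assume "(x,l) \<in> F"
    then have "(l,x) \<in> F" using sy unfolding sym_def by blast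
    then show "x = p" using 1 by simp
  qed
  show "(l,p) \<in> F" using lf unfolding nbr_def by auto
  then show "p \<noteq> l" using ir unfolding irrefl_def by auto
qed

lemma conn_remove_leaf:
  assumes T: "is_tree I F" and lf: "nbr F l = {p}" and SI: "S \<subseteq> I"
    and cS: "connected_on S F"
  shows "connected_on (S - {l}) (F \<inter> (I - {l}) \<times> (I - {l}))"
  unfolding connected_on_def
proof (intro ballI)
  fix a b assume a: "a \<in> S - {l}" and b: "b \<in> S - {l}"
  have ab: "(a,b) \<in> (F \<inter> S \<times> S)\<^sup>*" using cS a b unfolding connected_on_def by auto
  note lf' = leaf_facts[OF T lf]
  have h1: "\<forall>x. (l,x) \<in> F \<inter> S \<times> S \<longrightarrow> x = p" using lf'(1) by blast
  have h2: "\<forall>x. (x,l) \<in> F \<inter> S \<times> S \<longrightarrow> x = p" using lf'(2) by blast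
  have "(a,b) \<in> (F \<inter> S \<times> S \<inter> (-{l}) \<times> (-{l}))\<^sup>*"
    using avoid_leaf[OF h1 h2 lf'(3) ab] a b by blast
  moreover have "F \<inter> S \<times> S \<inter> (-{l}) \<times> (-{l}) = F \<inter> (I - {l}) \<times> (I - {l}) \<inter> (S - {l}) \<times> (S - {l})"
    using SI by auto
  ultimately show "(a,b) \<in> (F \<inter> (I - {l}) \<times> (I - {l}) \<inter> (S - {l}) \<times> (S - {l}))\<^sup>*" by simp
qed

lemma tree_remove_leaf:
  assumes T: "is_tree I F" and lI: "l \<in> I" and lf: "nbr F l = {p}" and c2: "card I \<ge> 2"
  shows "is_tree (I - {l}) (F \<inter> (I - {l}) \<times> (I - {l}))"
proof -
  have fin: "finite I" and FI: "F \<subseteq> I \<times> I" and sy: "sym F" and ir: "irrefl F"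
    and con: "connected_on I F" and cnt: "card {{s, t} | s t. (s, t) \<in> F} = card I - 1"
    using T unfolding is_tree_def by auto
  note lf' = leaf_facts[OF T lf]
  let ?I = "I - {l}" let ?F = "F \<inter> (I - {l}) \<times> (I - {l})"
  have c1: "connected_on ?I ?F" using conn_remove_leaf[OF T lf subset_refl con] .
  have c2': "?I \<noteq> {}"
  proof
    assume "?I = {}"
    then have "I \<subseteq> {l}" by auto
    then have "card I \<le> 1" using card_mono[of "{l}" I] by auto
    then show False using c2 by simp
  qed
  have c3: "sym ?F" using sy unfolding sym_def by blast
  have c4: "irrefl ?F" using ir unfolding irrefl_def by blast
  have c5: "card {{s, t} | s t. (s, t) \<in> ?F} = card ?I - 1"
  proof -
    let ?D = "{{s, t} | s t. (s, t) \<in> F}"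
    have D_fin: "finite ?D"
    proof -
      have "?D = (\<lambda>(s,t). {s,t}) ` F" by auto
      moreover have "finite F" using FI fin by (meson finite_SigmaI finite_subset)
      ultimately show ?thesis by simp
    qed
    have eq: "{{s, t} | s t. (s, t) \<in> ?F} = ?D - {{l,p}}"
    proof
      show "{{s, t} | s t. (s, t) \<in> ?F} \<subseteq> ?D - {{l,p}}"
      proof
        fix d assume "d \<in> {{s, t} | s t. (s, t) \<in> ?F}"
        then obtain s t where st: "(s,t) \<in> ?F" "d = {s,t}" by blast
        then have "s \<noteq> l" "t \<noteq> l" by auto
        then have "d \<noteq> {l,p}" using st(2) by (auto simp: doubleton_eq_iff)
        then show "d \<in> ?D - {{l,p}}" using st by blast
      qed
      show "?D - {{l,p}} \<subseteq> {{s, t} | s t. (s, t) \<in> ?F}"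
      proof
        fix d assume d: "d \<in> ?D - {{l,p}}"
        then obtain s t where st: "(s,t) \<in> F" "d = {s,t}" by blast
        have "s \<noteq> l"
        proof
          assume "s = l" then have "t = p" using lf'(1) st(1) by blast
          then show False using d st \<open>s = l\<close> by simp
        qed
        moreover have "t \<noteq> l"
        proof
          assume "t = l" then have "s = p" using lf'(2) st(1) by blast
          then show False using d st \<open>t = l\<close> by (auto simp: insert_commute)
        qed
        ultimately have "(s,t) \<in> ?F" using st FI by auto
        then show "d \<in> {{s, t} | s t. (s, t) \<in> ?F}" using st by blast
      qed
    qed
    have "{l,p} \<in> ?D" using lf'(4) by blast
    then have "card (?D - {{l,p}}) = card ?D - 1" by (rule card_Diff_singleton)
    moreover have "card ?I = card I - 1" using lI by (rule card_Diff_singleton)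
    ultimately show ?thesis using eq cnt by simp
  qed
  have c6: "finite ?I" using fin by blast
  have c7: "?F \<subseteq> ?I \<times> ?I" by blast
  show ?thesis unfolding is_tree_def using c1 c2' c3 c4 c5 c6 c7 by blast
qed

lemma leaf_in_sub:
  assumes T: "is_tree I F" and lf: "nbr F l = {p}" and lS: "l \<in> S" and ne: "S \<noteq> {l}"
    and cS: "connected_on S F" and SI: "S \<subseteq> I"
  shows "p \<in> S"
proof -
  obtain b where b: "b \<in> S" "b \<noteq> l" using lS ne by blast
  have "(l,b) \<in> (F \<inter> S \<times> S)\<^sup>*" using cS lS b unfolding connected_on_def by auto
  then have "(l,b) \<in> (F \<inter> S \<times> S)\<^sup>+" using b rtrancl_eq_or_trancl by metis
  then obtain y where "(l,y) \<in> F \<inter> S \<times> S" by (meson tranclD)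
  then show ?thesis using leaf_facts(1)[OF T lf] by auto
qed

lemma helly:
  assumes "is_tree I F" "\<forall>S\<in>SS. S \<subseteq> I \<and> S \<noteq> {} \<and> connected_on S F"
    "\<forall>S1\<in>SS. \<forall>S2\<in>SS. S1 \<inter> S2 \<noteq> {}"
  shows "\<exists>u\<in>I. \<forall>S\<in>SS. u \<in> S"
  using assms
proof (induction "card I" arbitrary: I F SS rule: less_induct)
  case less
  have fin: "finite I" and ne: "I \<noteq> {}" using less.prems(1) unfolding is_tree_def by auto
  show ?case
  proof (cases "card I \<ge> 2")
    case False
    moreover have "card I \<noteq> 0" using fin ne by simp
    ultimately have "card I = 1" by linarith
    then obtain u where u: "I = {u}" using card_1_singletonE by blast
    then have "\<forall>S\<in>SS. u \<in> S" using less.prems(2) by fastforce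
    then show ?thesis using u by auto
  next
    case True
    obtain l p where lI: "l \<in> I" and pI: "p \<in> I" and lf: "nbr F l = {p}"
      using tree_leaf[OF less.prems(1) True] by auto
    note lf' = leaf_facts[OF less.prems(1) lf]
    show ?thesis
    proof (cases "{l} \<in> SS")
      case True
      then have "\<forall>S\<in>SS. l \<in> S" using less.prems(3) by blast
      then show ?thesis using lI by auto
    next
      case False
      let ?I = "I - {l}" let ?F = "F \<inter> (I - {l}) \<times> (I - {l})"
      let ?SS = "(\<lambda>S. S - {l}) ` SS"
      have T': "is_tree ?I ?F" using tree_remove_leaf[OF less.prems(1) lI lf True] .
      have lt: "card ?I < card I" using lI fin by (meson card_Diff1_less)
      have p1: "\<forall>S\<in>?SS. S \<subseteq> ?I \<and> S \<noteq> {} \<and> connected_on S ?F"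
      proof
        fix S' assume "S' \<in> ?SS"
        then obtain S where S: "S \<in> SS" "S' = S - {l}" by auto
        have SI: "S \<subseteq> I" and Sne: "S \<noteq> {}" and cS: "connected_on S F" using less.prems(2) S by auto
        have "S - {l} \<noteq> {}"
        proof
          assume "S - {l} = {}"
          then have "S = {l}" using Sne by auto
          then show False using False S(1) by simp
        qed
        moreover have "connected_on (S - {l}) ?F" using conn_remove_leaf[OF less.prems(1) lf SI cS] .
        ultimately show "S' \<subseteq> ?I \<and> S' \<noteq> {} \<and> connected_on S' ?F" using S SI by auto
      qed
      have p2: "\<forall>S1\<in>?SS. \<forall>S2\<in>?SS. S1 \<inter> S2 \<noteq> {}"
      proof (intro ballI)
        fix S1' S2' assume "S1' \<in> ?SS" "S2' \<in> ?SS"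
        then obtain S1 S2 where S: "S1 \<in> SS" "S1' = S1 - {l}" "S2 \<in> SS" "S2' = S2 - {l}" by auto
        obtain x where x: "x \<in> S1" "x \<in> S2" using less.prems(3) S by blast
        show "S1' \<inter> S2' \<noteq> {}"
        proof (cases "x = l")
          case False then show ?thesis using x S by auto
        next
          case True
          have n1: "S1 \<noteq> {l}" using S False by auto
          have n2: "S2 \<noteq> {l}" using S False by auto
          have "p \<in> S1" using leaf_in_sub[OF less.prems(1) lf _ n1] x True S less.prems(2) by simp
          moreover have "p \<in> S2" using leaf_in_sub[OF less.prems(1) lf _ n2] x True S less.prems(2) by simp
          ultimately show ?thesis using S lf'(3) by auto
        qed
      qed
      obtain u where "u \<in> ?I" "\<forall>S\<in>?SS. u \<in> S" using less.hyps[OF lt T' p1 p2] by blast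
      then show ?thesis by auto
    qed
  qed
qed



definition conn :: "'a graph \<Rightarrow> 'a set \<Rightarrow> bool" where
  "conn H K \<longleftrightarrow> (\<forall>a\<in>K. \<forall>b\<in>K. (a,b) \<in> (edges H \<inter> K \<times> K)\<^sup>*)"

lemma TK_conn:
  assumes TD: "tree_decomp H I F X" and KV: "K \<subseteq> verts H" and cK: "conn H K"
  shows "connected_on {s\<in>I. X s \<inter> K \<noteq> {}} F"
proof -
  let ?T = "{s\<in>I. X s \<inter> K \<noteq> {}}"
  have cov: "\<forall>(u, v)\<in>edges H. \<exists>t\<in>I. u \<in> X t \<and> v \<in> X t"
    and bc: "\<forall>v\<in>verts H. connected_on {t\<in>I. v \<in> X t} F"
    using TD unfolding tree_decomp_def by auto
  have vb: "(t1,t2) \<in> (F \<inter> ?T \<times> ?T)\<^sup>*" if "v \<in> K" "t1 \<in> I" "t2 \<in> I" "v \<in> X t1" "v \<in> X t2" for v t1 t2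
  proof -
    have "(t1,t2) \<in> (F \<inter> {t\<in>I. v \<in> X t} \<times> {t\<in>I. v \<in> X t})\<^sup>*"
      using bc that KV unfolding connected_on_def by blast
    moreover have "F \<inter> {t\<in>I. v \<in> X t} \<times> {t\<in>I. v \<in> X t} \<subseteq> F \<inter> ?T \<times> ?T" using that(1) by blast
    ultimately show ?thesis using rtrancl_mono by blast
  qed
  show ?thesis unfolding connected_on_def
  proof (intro ballI)
    fix t1 t2 assume t1: "t1 \<in> ?T" and t2: "t2 \<in> ?T"
    obtain a where a: "a \<in> X t1" "a \<in> K" using t1 by blast
    obtain b where b: "b \<in> X t2" "b \<in> K" using t2 by blast
    have ab: "(a,b) \<in> (edges H \<inter> K \<times> K)\<^sup>*" using cK a b unfolding conn_def by blast
    have "\<forall>t2\<in>I. b \<in> X t2 \<longrightarrow> (t1,t2) \<in> (F \<inter> ?T \<times> ?T)\<^sup>*"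
      using ab
    proof (induction b rule: rtrancl_induct)
      case base
      then show ?case using vb a t1 by blast
    next
      case (step c b)
      then obtain t' where t': "t' \<in> I" "c \<in> X t'" "b \<in> X t'" using cov by blast
      have 1: "(t1,t') \<in> (F \<inter> ?T \<times> ?T)\<^sup>*" using step.IH t' by blast
      show ?case
      proof (intro ballI impI)
        fix t2 assume "t2 \<in> I" "b \<in> X t2"
        then have "(t',t2) \<in> (F \<inter> ?T \<times> ?T)\<^sup>*" using vb[of b t' t2] t' step.hyps(2) by blast
        then show "(t1,t2) \<in> (F \<inter> ?T \<times> ?T)\<^sup>*" using 1 by simp
      qed
    qed
    then show "(t1,t2) \<in> (F \<inter> ?T \<times> ?T)\<^sup>*" using t2 b by blast
  qed
qed

definition closedR :: "'a graph \<Rightarrow> 'a set \<Rightarrow> 'a set \<Rightarrow> bool" where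
  "closedR H R Y \<longleftrightarrow> Y \<subseteq> R \<and> (\<forall>u\<in>Y. \<forall>v\<in>R - Y. (u,v) \<notin> edges H)"

lemma closed_sep:
  assumes "closedR H (verts H - S) Y" "S \<subseteq> verts H" "finite (verts H)"
    and "real (card Y) \<le> 2 * real (card (verts H)) / 3"
    and "real (card (verts H - S - Y)) \<le> 2 * real (card (verts H)) / 3"
  shows "balanced_separation H (Y \<union> S) ((verts H - S - Y) \<union> S) \<and> (Y \<union> S) \<inter> ((verts H - S - Y) \<union> S) = S"
proof -
  have Y: "Y \<subseteq> verts H - S" using assms(1) unfolding closedR_def by auto
  have e1: "(Y \<union> S) - ((verts H - S - Y) \<union> S) = Y" using Y by blast
  have e2: "((verts H - S - Y) \<union> S) - (Y \<union> S) = verts H - S - Y" by blast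
  have "separation H (Y \<union> S) ((verts H - S - Y) \<union> S)"
    unfolding separation_def e1 e2 using assms(1,2) Y unfolding closedR_def by blast
  then show ?thesis unfolding balanced_separation_def e1 e2 using assms(4,5) Y by blast
qed

lemma sep_or_big:
  assumes G: "is_graph H" and SV: "S \<subseteq> verts H"
  shows "(\<exists>A B. balanced_separation H A B \<and> A \<inter> B = S) \<or>
         (\<exists>K. K \<subseteq> verts H - S \<and> conn H K \<and> real (card K) > 2 * real (card (verts H)) / 3)"
proof (rule ccontr)
  assume na: "\<not> ?thesis"
  let ?n = "real (card (verts H))"
  let ?R = "verts H - S"
  have fin: "finite (verts H)" and sy: "sym (edges H)" using G unfolding is_graph_def by auto
  have finR: "finite ?R" using fin by blast
  have npos: "card (verts H) > 0"
  proof (rule ccontr)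
    assume "\<not> card (verts H) > 0"
    then have V0: "verts H = {}" using fin by simp
    then have "S = {}" using SV by blast
    have "balanced_separation H S S" unfolding balanced_separation_def separation_def
      using V0 \<open>S = {}\<close> by simp
    then show False using na by blast
  qed
  have cardR: "card ?R \<le> card (verts H)" using fin by (simp add: card_mono)
  have nomid: "\<not> (?n / 3 \<le> real (card Y) \<and> real (card Y) \<le> 2 * ?n / 3)" if "closedR H ?R Y" for Y
  proof
    assume m: "?n / 3 \<le> real (card Y) \<and> real (card Y) \<le> 2 * ?n / 3"
    have YR: "Y \<subseteq> ?R" using that unfolding closedR_def by auto
    have "finite Y" using YR finR by (rule finite_subset)
    then have "card (?R - Y) = card ?R - card Y" using YR by (rule card_Diff_subset)
    moreover have "card Y \<le> card ?R" using YR finR by (rule card_mono[rotated])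
    ultimately have "card (?R - Y) + card Y = card ?R" by simp
    then have "real (card (?R - Y)) + real (card Y) \<le> ?n" using cardR by (metis of_nat_add of_nat_mono)
    then have "real (card (?R - Y)) \<le> 2 * ?n / 3" using m by linarith
    then have "balanced_separation H (Y \<union> S) ((?R - Y) \<union> S) \<and> (Y \<union> S) \<inter> ((?R - Y) \<union> S) = S"
      using closed_sep[OF that SV fin] m by simp
    then show False using na by blast
  qed
  let ?P = "\<lambda>Y. closedR H ?R Y \<and> real (card Y) < ?n / 3"
  have P0: "?P {}" unfolding closedR_def using npos by simp
  have Pb: "\<forall>Y. ?P Y \<longrightarrow> card Y < card (verts H) + 1"
  proof (intro allI impI)
    fix Y assume "?P Y"
    then have "Y \<subseteq> verts H" unfolding closedR_def by blast
    then have "card Y \<le> card (verts H)" using fin by (rule card_mono[rotated])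
    then show "card Y < card (verts H) + 1" by simp
  qed
  obtain Y where PY: "?P Y" and Ymax: "\<forall>Z. ?P Z \<longrightarrow> card Z \<le> card Y"
    using Lattices_Big.ex_has_greatest_nat[OF P0 Pb] by blast
  have YR: "Y \<subseteq> ?R" and Ycl: "\<forall>u\<in>Y. \<forall>v\<in>?R - Y. (u,v) \<notin> edges H" using PY unfolding closedR_def by blast+
  show False
  proof (cases "Y = ?R")
    case True
    have "real (card (?R - Y)) \<le> 2 * ?n / 3" using True by simp
    moreover have "real (card Y) \<le> 2 * ?n / 3" using PY by simp
    ultimately have "balanced_separation H (Y \<union> S) ((?R - Y) \<union> S) \<and> (Y \<union> S) \<inter> ((?R - Y) \<union> S) = S"
      using closed_sep[OF _ SV fin] PY by blast
    then show False using na by blast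
  next
    case False
    then obtain x where x: "x \<in> ?R" "x \<notin> Y" using YR by blast
    let ?E = "edges H \<inter> ?R \<times> ?R"
    define K where "K = {y\<in>?R. (x,y) \<in> ?E\<^sup>*}"
    have xK: "x \<in> K" unfolding K_def using x by simp
    have KR: "K \<subseteq> ?R" unfolding K_def by blast
    have notY: "y \<notin> Y" if "(x,y) \<in> ?E\<^sup>*" for y
      using that
    proof (induction y rule: rtrancl_induct)
      case base then show ?case using x by simp
    next
      case (step z y)
      show ?case
      proof
        assume "y \<in> Y"
        have "(y,z) \<in> edges H" using step.hyps(2) sy unfolding sym_def by blast
        moreover have "z \<in> ?R - Y" using step.hyps(2) step.IH by blast
        ultimately show False using Ycl \<open>y \<in> Y\<close> by blast
      qed
    qed
    have KY: "K \<inter> Y = {}" unfolding K_def using notY by blast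
    have Kcl: "closedR H ?R K" unfolding closedR_def
    proof (intro conjI ballI)
      show "K \<subseteq> ?R" by (rule KR)
      fix u v assume u: "u \<in> K" and v: "v \<in> ?R - K"
      show "(u,v) \<notin> edges H"
      proof
        assume "(u,v) \<in> edges H"
        moreover have "u \<in> ?R" using u KR by (rule subsetD[rotated])
        ultimately have "(u,v) \<in> ?E" using v by simp
        moreover have "(x,u) \<in> ?E\<^sup>*" using u unfolding K_def by blast
        ultimately have "(x,v) \<in> ?E\<^sup>*" by (simp add: rtrancl.rtrancl_into_rtrancl)
        then show False using v unfolding K_def by blast
      qed
    qed
    have YKcl: "closedR H ?R (Y \<union> K)" using Kcl PY unfolding closedR_def by blast
    have finK: "finite K" using KR finR by (meson finite_subset)
    have finY: "finite Y" using YR finR by (meson finite_subset)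
    have cYK: "card (Y \<union> K) = card Y + card K" using KY finK finY by (metis card_Un_disjoint inf_commute)
    have "card K > 0" using xK finK card_gt_0_iff by blast
    then have "\<not> ?P (Y \<union> K)"
    proof -
      assume k0: "card K > 0"
      show "\<not> ?P (Y \<union> K)"
      proof
        assume "?P (Y \<union> K)"
        then have "card (Y \<union> K) \<le> card Y" using Ymax by blast
        then show False using cYK k0 by linarith
      qed
    qed
    then have "real (card (Y \<union> K)) \<ge> ?n / 3" using YKcl by simp
    then have "real (card (Y \<union> K)) > 2 * ?n / 3" using nomid[OF YKcl] by linarith
    then have "real (card K) > ?n / 3" using cYK PY by simp
    then have Kbig: "real (card K) > 2 * ?n / 3" using nomid[OF Kcl] by linarith
    have symE: "sym ?E" using sy unfolding sym_def by blast
    have inK: "(z,y) \<in> (edges H \<inter> K \<times> K)\<^sup>* \<and> y \<in> K" if "(z,y) \<in> ?E\<^sup>*" "z \<in> K" for z y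
      using that(1)
    proof (induction y rule: rtrancl_induct)
      case base then show ?case using that(2) by simp
    next
      case (step w y)
      then have "(x,w) \<in> ?E\<^sup>*" unfolding K_def by blast
      then have "(x,y) \<in> ?E\<^sup>*" using step.hyps(2) by (simp add: rtrancl.rtrancl_into_rtrancl)
      then have yK: "y \<in> K" unfolding K_def using step.hyps(2) by blast
      then have wy: "(w,y) \<in> edges H \<inter> K \<times> K" using step by blast
      have "(z,w) \<in> (edges H \<inter> K \<times> K)\<^sup>*" using step.IH by blast
      then have "(z,y) \<in> (edges H \<inter> K \<times> K)\<^sup>*" using wy by (rule rtrancl.rtrancl_into_rtrancl)
      then show ?case using yK by blast
    qed
    have "conn H K" unfolding conn_def
    proof (intro ballI)
      fix a b assume a: "a \<in> K" and b: "b \<in> K"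
      have "(x,a) \<in> ?E\<^sup>*" using a unfolding K_def by blast
      then have "(a,x) \<in> ?E\<^sup>*" using symE by (metis rtrancl_converseI sym_conv_converse_eq)
      then have 1: "(a,x) \<in> (edges H \<inter> K \<times> K)\<^sup>*" using inK a by blast
      have "(x,b) \<in> ?E\<^sup>*" using b unfolding K_def by blast
      then have 2: "(x,b) \<in> (edges H \<inter> K \<times> K)\<^sup>*" using inK xK by blast
      show "(a,b) \<in> (edges H \<inter> K \<times> K)\<^sup>*" using 1 2 by simp
    qed
    then show False using na KR Kbig by blast
  qed
qed



lemma tree_sep:
  assumes G: "is_graph H" and TD: "tree_decomp H I F X"
  shows "\<exists>t\<in>I. \<exists>A B. balanced_separation H A B \<and> A \<inter> B = X t"
proof (rule ccontr)
  assume na: "\<not> ?thesis"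
  let ?n = "real (card (verts H))"
  have fin: "finite (verts H)" using G unfolding is_graph_def by auto
  have T: "is_tree I F" and XV: "\<forall>t\<in>I. X t \<subseteq> verts H" and cov: "\<forall>v\<in>verts H. \<exists>t\<in>I. v \<in> X t"
    using TD unfolding tree_decomp_def by blast+
  define P where "P = (\<lambda>t K. K \<subseteq> verts H - X t \<and> conn H K \<and> real (card K) > 2 * ?n / 3)"
  have exK: "\<exists>K. P t K" if "t \<in> I" for t
  proof -
    have "X t \<subseteq> verts H" using XV that by blast
    note so = sep_or_big[OF G this]
    have "\<not> (\<exists>A B. balanced_separation H A B \<and> A \<inter> B = X t)" using na that by blast
    then show ?thesis using so unfolding P_def by blast
  qed
  define Kf where "Kf = (\<lambda>t. SOME K. P t K)"
  have PK: "P t (Kf t)" if "t \<in> I" for t using exK[OF that] unfolding Kf_def by (rule someI_ex)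
  define SS where "SS = (\<lambda>t. {s\<in>I. X s \<inter> Kf t \<noteq> {}}) ` I"
  have KV: "Kf t \<subseteq> verts H" if "t \<in> I" for t using PK[OF that] unfolding P_def by blast
  have p1: "\<forall>S\<in>SS. S \<subseteq> I \<and> S \<noteq> {} \<and> connected_on S F"
  proof
    fix S assume "S \<in> SS"
    then obtain t where t: "t \<in> I" "S = {s\<in>I. X s \<inter> Kf t \<noteq> {}}" unfolding SS_def by blast
    have "2 * ?n / 3 \<ge> 0" by simp
    then have "real (card (Kf t)) > 0" using PK[OF t(1)] unfolding P_def by linarith
    then have "card (Kf t) > 0" by simp
    then have "Kf t \<noteq> {}" using card_gt_0_iff by blast
    then obtain v where v: "v \<in> Kf t" by blast
    then obtain s where "s \<in> I" "v \<in> X s" using cov KV[OF t(1)] by blast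
    then have "S \<noteq> {}" using t v by blast
    moreover have "connected_on S F" using TK_conn[OF TD KV[OF t(1)]] PK[OF t(1)] t unfolding P_def by simp
    ultimately show "S \<subseteq> I \<and> S \<noteq> {} \<and> connected_on S F" using t by blast
  qed
  have p2: "\<forall>S1\<in>SS. \<forall>S2\<in>SS. S1 \<inter> S2 \<noteq> {}"
  proof (intro ballI)
    fix S1 S2 assume "S1 \<in> SS" "S2 \<in> SS"
    then obtain t1 t2 where t: "t1 \<in> I" "S1 = {s\<in>I. X s \<inter> Kf t1 \<noteq> {}}" "t2 \<in> I" "S2 = {s\<in>I. X s \<inter> Kf t2 \<noteq> {}}"
      unfolding SS_def by blast
    have "Kf t1 \<inter> Kf t2 \<noteq> {}"
    proof
      assume dj: "Kf t1 \<inter> Kf t2 = {}"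
      have f1: "finite (Kf t1)" using KV[OF t(1)] fin by (rule finite_subset)
      have f2: "finite (Kf t2)" using KV[OF t(3)] fin by (rule finite_subset)
      have "card (Kf t1 \<union> Kf t2) = card (Kf t1) + card (Kf t2)" using dj f1 f2 by (rule card_Un_disjoint[rotated 2])
      moreover have "Kf t1 \<union> Kf t2 \<subseteq> verts H" using KV t by blast
      then have "card (Kf t1 \<union> Kf t2) \<le> card (verts H)" using fin by (rule card_mono[rotated])
      moreover have "real (card (Kf t1)) > 2 * ?n / 3" "real (card (Kf t2)) > 2 * ?n / 3"
        using PK[OF t(1)] PK[OF t(3)] unfolding P_def by blast+
      ultimately show False by linarith
    qed
    then obtain v where v: "v \<in> Kf t1" "v \<in> Kf t2" by blast
    then obtain s where "s \<in> I" "v \<in> X s" using cov KV[OF t(1)] by blast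
    then show "S1 \<inter> S2 \<noteq> {}" using t v by blast
  qed
  obtain u where u: "u \<in> I" "\<forall>S\<in>SS. u \<in> S" using helly[OF T p1 p2] by (elim bexE) 
  have A: "{s\<in>I. X s \<inter> Kf u \<noteq> {}} \<in> SS" unfolding SS_def using imageI[of u I "\<lambda>t. {s\<in>I. X s \<inter> Kf t \<noteq> {}}", OF u(1)] by simp
  have B: "u \<in> {s\<in>I. X s \<inter> Kf u \<noteq> {}}" using bspec[OF u(2) A] .
  have C: "Kf u \<subseteq> verts H - X u" using PK[OF u(1)] unfolding P_def by (elim conjE)
  show False using B C by blast
qed



lemma alpha_set_fin:
  assumes "finite (verts G)"
  shows "finite {card A | A. independent G A}"
proof -
  have "{card A | A. independent G A} \<subseteq> {..card (verts G)}"
  proof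
    fix x assume "x \<in> {card A | A. independent G A}"
    then obtain A where A: "x = card A" "independent G A" by blast
    then have "A \<subseteq> verts G" unfolding independent_def by blast
    then have "card A \<le> card (verts G)" using assms by (rule card_mono[rotated])
    then show "x \<in> {..card (verts G)}" using A by simp
  qed
  then show ?thesis by (rule finite_subset) simp
qed

lemma alpha_ge:
  assumes "finite (verts G)" "independent G A"
  shows "card A \<le> alpha G"
  unfolding alpha_def using alpha_set_fin[OF assms(1)] assms(2) by (intro Max_ge) blast+

lemma alpha_ex:
  assumes "finite (verts G)"
  shows "\<exists>A. independent G A \<and> card A = alpha G"
proof -
  have "independent G {}" unfolding independent_def by simp
  then have ne: "{card A | A. independent G A} \<noteq> {}" by blast
  have "alpha G \<in> {card A | A. independent G A}" unfolding alpha_def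
    using Max_in[OF alpha_set_fin[OF assms] ne] .
  then have "\<exists>A. alpha G = card A \<and> independent G A" by (simp only: mem_Collect_eq)
  then show ?thesis by metis
qed

lemma alpha_le_card:
  assumes "finite (verts G)"
  shows "alpha G \<le> card (verts G)"
proof -
  obtain A where A: "independent G A" "card A = alpha G" using alpha_ex[OF assms] by blast
  then have "A \<subseteq> verts G" unfolding independent_def by blast
  then have "card A \<le> card (verts G)" using assms by (rule card_mono[rotated])
  then show ?thesis using A by simp
qed

lemma alpha_union:
  assumes fin: "finite (verts G)"
  shows "alpha (induced G (S \<union> T)) \<le> alpha (induced G S) + card (verts G \<inter> T)"
proof -
  have f1: "finite (verts (induced G (S \<union> T)))" using fin unfolding induced_def verts_def by simp
  have f2: "finite (verts (induced G S))" using fin unfolding induced_def verts_def by simp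
  obtain A where A: "independent (induced G (S \<union> T)) A" "card A = alpha (induced G (S \<union> T))"
    using alpha_ex[OF f1] by blast
  have Asub: "A \<subseteq> verts G \<inter> (S \<union> T)" using A(1) unfolding independent_def induced_def verts_def by simp
  have "independent (induced G S) (A \<inter> S)"
    using A(1) Asub unfolding independent_def induced_def verts_def edges_def by auto
  then have 1: "card (A \<inter> S) \<le> alpha (induced G S)" using alpha_ge[OF f2] by blast
  have "A - S \<subseteq> verts G \<inter> T" using Asub by blast
  then have 2: "card (A - S) \<le> card (verts G \<inter> T)" using fin by (intro card_mono) auto
  have fA: "finite A" using Asub fin by (meson finite_Int finite_subset)
  have "card A = card (A \<inter> S) + card (A - S)" using fA by (metis card_Int_Diff)
  then show ?thesis using A 1 2 by linarith
qed

lemma s_alpha_le: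
  assumes "balanced_separation G A B"
  shows "s_alpha G \<le> alpha (induced G (A \<inter> B))"
  unfolding s_alpha_def by (rule cInf_lower) (use assms in blast)+

lemma s_alpha_le_card:
  assumes G: "is_graph G"
  shows "s_alpha G \<le> card (verts G)"
proof -
  have fin: "finite (verts G)" using G unfolding is_graph_def by blast
  have "balanced_separation G (verts G) (verts G)"
    unfolding balanced_separation_def separation_def by simp
  then have "s_alpha G \<le> alpha (induced G (verts G \<inter> verts G))" by (rule s_alpha_le)
  also have "\<dots> \<le> card (verts (induced G (verts G \<inter> verts G)))"
    using fin by (intro alpha_le_card) (simp add: induced_def verts_def)
  also have "\<dots> = card (verts G)" by (simp add: induced_def verts_def)
  finally show ?thesis .
qed

lemma cover_sum:
  assumes "finite V"
  shows "(\<Sum>C\<in>#M. card (V \<inter> C)) = (\<Sum>v\<in>V. size (filter_mset (\<lambda>C. v \<in> C) M))"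
proof (induction M)
  case empty
  then show ?case by simp
next
  case (add C M)
  have "(\<Sum>v\<in>V. size (filter_mset (\<lambda>C'. v \<in> C') (add_mset C M)))
      = (\<Sum>v\<in>V. (if v \<in> C then 1 else 0) + size (filter_mset (\<lambda>C'. v \<in> C') M))"
    by (intro sum.cong) auto
  also have "\<dots> = (\<Sum>v\<in>V. if v \<in> C then 1 else (0::nat)) + (\<Sum>v\<in>V. size (filter_mset (\<lambda>C'. v \<in> C') M))"
    by (rule sum.distrib)
  also have "(\<Sum>v\<in>V. if v \<in> C then 1 else (0::nat)) = card (V \<inter> C)"
    using assms by (simp add: sum.If_cases Int_def)
  finally show ?case using add.IH by simp
qed

lemma good_member:
  assumes fin: "finite V" and ne: "M \<noteq> {#}"
    and cov: "\<forall>v\<in>V. real (size (filter_mset (\<lambda>C. v \<in> C) M)) \<ge> \<beta> * real (size M)"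
  shows "\<exists>C\<in>#M. real (card (V \<inter> C)) \<ge> \<beta> * real (card V)"
proof (rule ccontr)
  assume na: "\<not> ?thesis"
  then have lt: "\<forall>C\<in>#M. real (card (V \<inter> C)) < \<beta> * real (card V)" by (simp add: not_le)
  have "real (\<Sum>C\<in>#M. card (V \<inter> C)) = (\<Sum>C\<in>#M. real (card (V \<inter> C)))"
    by (simp add: of_nat_sum_mset multiset.map_comp o_def)
  also have "\<dots> < (\<Sum>C\<in>#M. \<beta> * real (card V))"
    using lt ne
  proof (induction M)
    case empty then show ?case by simp
  next
    case (add C M)
    show ?case
    proof (cases "M = {#}")
      case True then show ?thesis using add.prems by simp
    next
      case False
      have "(\<Sum>C\<in>#M. real (card (V \<inter> C))) < (\<Sum>C\<in>#M. \<beta> * real (card V))"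
        using add.IH add.prems False by simp
      moreover have "real (card (V \<inter> C)) < \<beta> * real (card V)" using add.prems by simp
      ultimately show ?thesis by simp
    qed
  qed
  also have "\<dots> = real (size M) * (\<beta> * real (card V))" by (simp add: sum_mset_constant)
  also have "\<dots> = (\<Sum>v\<in>V. \<beta> * real (size M))" by simp
  also have "\<dots> \<le> (\<Sum>v\<in>V. real (size (filter_mset (\<lambda>C. v \<in> C) M)))"
    using cov by (intro sum_mono) auto
  also have "\<dots> = real (\<Sum>v\<in>V. size (filter_mset (\<lambda>C. v \<in> C) M))" by simp
  finally show False using cover_sum[OF fin, of M] by simp
qed



lemma induced_graph:
  assumes G: "is_graph G"
  shows "is_graph (induced G C)"
  using G unfolding is_graph_def induced_def verts_def edges_def sym_def irrefl_def by auto

lemma trivial_td: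
  assumes G: "is_graph H"
  shows "tree_decomp H {0} {} (\<lambda>_. verts H)"
proof -
  have ET: "edges H \<subseteq> verts H \<times> verts H" using G unfolding is_graph_def by blast
  have e: "{{s, t} | s t. (s, t) \<in> ({}::(nat\<times>nat) set)} = {}" by blast
  have "is_tree {0} {}" unfolding is_tree_def connected_on_def e by simp
  moreover have "connected_on {t\<in>{0::nat}. v \<in> verts H} {}" if "v \<in> verts H" for v
    unfolding connected_on_def using that by simp
  ultimately show ?thesis unfolding tree_decomp_def using ET by blast
qed

lemma good_td:
  assumes G: "is_graph H" and ta: "tree_alpha H \<le> w"
  shows "\<exists>I F X. tree_decomp H I F X \<and> (\<forall>t\<in>I. alpha (induced H (X t)) \<le> w)"
proof -
  let ?DS = "{Max ((\<lambda>t. alpha (induced H (X t))) ` I) | I F X. tree_decomp H I F X}"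
  have "Max ((\<lambda>t. alpha (induced H ((\<lambda>_. verts H) t))) ` {0}) \<in> ?DS"
    apply (rule CollectI)
    apply (rule exI[of _ "{0}"], rule exI[of _ "{}"], rule exI[of _ "\<lambda>_. verts H"])
    using trivial_td[OF G] by simp
  then have "?DS \<noteq> {}" by blast
  then have "Inf ?DS \<in> ?DS" by (rule Inf_nat_def1)
  then obtain I F X where IFX: "tree_decomp H I F X" "Inf ?DS = Max ((\<lambda>t. alpha (induced H (X t))) ` I)"
    by blast
  have finI: "finite I" using IFX(1) unfolding tree_decomp_def is_tree_def by blast
  have "alpha (induced H (X t)) \<le> w" if "t \<in> I" for t
  proof -
    have "alpha (induced H (X t)) \<le> Max ((\<lambda>t. alpha (induced H (X t))) ` I)"
      using finI that by (intro Max_ge) auto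
    also have "\<dots> = tree_alpha H" using IFX(2) unfolding tree_alpha_def by simp
    finally show ?thesis using ta by simp
  qed
  then show ?thesis using IFX(1) by blast
qed

lemma key:
  assumes G: "is_graph G" and r: "r \<ge> (1::nat)"
    and cov: "general_cover G (1 - 1 / real r) CC"
    and ta: "\<forall>C\<in>#CC. tree_alpha (induced G C) \<le> w"
  shows "real (s_alpha G) \<le> real w + real (card (verts G)) / real r"
proof -
  let ?V = "verts G" let ?n = "card (verts G)"
  have fin: "finite ?V" using G unfolding is_graph_def by blast
  have ne: "CC \<noteq> {#}" and sub: "\<forall>C\<in>#CC. C \<subseteq> ?V"
    and cv: "\<forall>v\<in>?V. real (size (filter_mset (\<lambda>C. v \<in> C) CC)) \<ge> (1 - 1 / real r) * real (size CC)"
    using cov unfolding general_cover_def by blast+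
  obtain C where C: "C \<in># CC" "real (card (?V \<inter> C)) \<ge> (1 - 1 / real r) * real ?n"
    using good_member[OF fin ne cv] by blast
  have CV: "C \<subseteq> ?V" using sub C(1) by blast
  define H where "H = induced G C"
  have GH: "is_graph H" unfolding H_def using induced_graph[OF G] .
  have vH: "verts H = ?V \<inter> C" unfolding H_def induced_def verts_def by simp
  have eH: "edges H = edges G \<inter> C \<times> C" unfolding H_def induced_def edges_def by simp
  obtain I F X where TD: "tree_decomp H I F X" and bw: "\<forall>t\<in>I. alpha (induced H (X t)) \<le> w"
    using good_td[OF GH] ta C(1) unfolding H_def by blast
  obtain t A B where t: "t \<in> I" and bs: "balanced_separation H A B" and AB: "A \<inter> B = X t"
    using tree_sep[OF GH TD] by blast
  have XtH: "X t \<subseteq> verts H" using TD t unfolding tree_decomp_def by blast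
  have AuB: "A \<union> B = verts H" and noedge: "\<forall>u\<in>A - B. \<forall>v\<in>B - A. (u, v) \<notin> edges H"
    and cA: "real (card (A - B)) \<le> 2 * real (card (verts H)) / 3"
    and cB: "real (card (B - A)) \<le> 2 * real (card (verts H)) / 3"
    using bs unfolding balanced_separation_def separation_def by blast+
  define D where "D = ?V - C"
  have e1: "(A \<union> D) - (B \<union> D) = A - B" using AuB vH unfolding D_def by blast
  have e2: "(B \<union> D) - (A \<union> D) = B - A" using AuB vH unfolding D_def by blast
  have e3: "(A \<union> D) \<inter> (B \<union> D) = X t \<union> D" using AB by blast
  have cH: "card (verts H) \<le> ?n" unfolding vH using fin by (intro card_mono) auto
  have sepG: "separation G (A \<union> D) (B \<union> D)"
    unfolding separation_def e1 e2
  proof (intro conjI ballI)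
    show "A \<union> D \<union> (B \<union> D) = ?V" using AuB vH CV unfolding D_def by blast
    fix u v assume u: "u \<in> A - B" and v: "v \<in> B - A"
    have "u \<in> C" "v \<in> C" using u v AuB vH by blast+
    then show "(u, v) \<notin> edges G" using noedge u v eH by blast
  qed
  have "balanced_separation G (A \<union> D) (B \<union> D)"
    unfolding balanced_separation_def e1 e2 using sepG cA cB cH
    by (smt (verit, ccfv_SIG) divide_right_mono of_nat_le_iff mult_left_mono zero_le_numeral)
  then have "s_alpha G \<le> alpha (induced G (X t \<union> D))" using s_alpha_le e3 by metis
  also have "\<dots> \<le> alpha (induced G (X t)) + card (?V \<inter> D)" using alpha_union[OF fin] .
  also have "induced G (X t) = induced H (X t)"
    using XtH vH unfolding H_def induced_def verts_def edges_def by auto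
  finally have 0: "s_alpha G \<le> alpha (induced H (X t)) + card (?V \<inter> D)" .
  have "alpha (induced H (X t)) \<le> w" using bw t by blast
  then have 1: "s_alpha G \<le> w + card (?V \<inter> D)" using 0 by linarith
  have "card (?V \<inter> D) + card (?V \<inter> C) = ?n"
  proof -
    have "?V \<inter> D = ?V - C" unfolding D_def by blast
    then have "card (?V \<inter> D) = card ?V - card (?V \<inter> C)" using fin by (simp add: card_Diff_subset_Int Diff_Int2)
    moreover have "card (?V \<inter> C) \<le> card ?V" using fin by (intro card_mono) auto
    ultimately show ?thesis by simp
  qed
  then have "real (card (?V \<inter> D)) = real ?n - real (card (?V \<inter> C))" by linarith
  also have "\<dots> \<le> real ?n - (1 - 1 / real r) * real ?n" using C(2) by linarith
  also have "\<dots> = real ?n / real r" by (simp add: algebra_simps)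
  finally show ?thesis using 1 by (smt (verit) of_nat_add of_nat_mono)
qed



lemma part1:
  fixes \<G> :: "'a graph set"
  assumes graphs: "\<forall>G\<in>\<G>. is_graph G"
    and frag: "frac_tree_alpha_fragile \<G>"
  shows "\<forall>c::nat. c \<ge> 1 \<longrightarrow> (\<exists>k::nat. \<forall>G\<in>\<G>. card (verts G) \<ge> k \<longrightarrow>
            real (s_alpha G) < real (card (verts G)) / real c)"
proof (intro allI impI)
  fix c :: nat assume c: "c \<ge> 1"
  obtain f :: "nat \<Rightarrow> nat" where hf: "\<forall>r::nat. r \<ge> 1 \<longrightarrow> (\<forall>G\<in>\<G>. \<exists>CC. general_cover G (1 - 1 / real r) CC
        \<and> (\<forall>C\<in>#CC. tree_alpha (induced G C) \<le> f r))"
    using frag unfolding frac_tree_alpha_fragile_def by blast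
  define r where "r = 2 * c"
  have r1: "r \<ge> 1" unfolding r_def using c by simp
  define k where "k = r * f r + 1"
  show "\<exists>k::nat. \<forall>G\<in>\<G>. card (verts G) \<ge> k \<longrightarrow> real (s_alpha G) < real (card (verts G)) / real c"
  proof (intro exI ballI impI)
    fix G assume G: "G \<in> \<G>" and nk: "card (verts G) \<ge> k"
    obtain CC where CC: "general_cover G (1 - 1 / real r) CC" "\<forall>C\<in>#CC. tree_alpha (induced G C) \<le> f r"
      using hf r1 G by blast
    have b: "real (s_alpha G) \<le> real (f r) + real (card (verts G)) / real r"
      using key[OF _ r1 CC(1) CC(2)] graphs G by blast
    have rpos: "real r > 0" using r1 by simp
    have "r * f r < card (verts G)" using nk unfolding k_def by simp
    then have "real (card (verts G)) > real r * real (f r)" by (metis of_nat_less_iff of_nat_mult)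
    then have lt: "real (f r) < real (card (verts G)) / real r" using rpos by (simp add: pos_less_divide_eq mult.commute)
    have "real (card (verts G)) / real c = 2 * (real (card (verts G)) / real r)"
      unfolding r_def by simp
    then show "real (s_alpha G) < real (card (verts G)) / real c" using b lt by linarith
  qed
qed

lemma part2:
  fixes \<G> :: "'a graph set"
  assumes graphs: "\<forall>G\<in>\<G>. is_graph G"
    and p1: "\<forall>c::nat. c \<ge> 1 \<longrightarrow> (\<exists>k::nat. \<forall>G\<in>\<G>. card (verts G) \<ge> k \<longrightarrow>
            real (s_alpha G) < real (card (verts G)) / real c)"
  shows "sublinear_sep_alpha \<G>"
  unfolding sublinear_sep_alpha_def
proof (rule LIMSEQ_I)
  fix e :: real assume e: "0 < e"
  define c where "c = nat \<lceil>2 / e\<rceil> + 1"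
  have c1: "c \<ge> 1" unfolding c_def by simp
  have "real c > 2 / e" unfolding c_def by linarith
  then have "2 < real c * e" using e by (simp add: pos_divide_less_eq)
  then have ce: "1 / real c < e / 2" using c1 by (simp add: field_simps)
  obtain k :: nat where hk: "\<forall>G\<in>\<G>. card (verts G) \<ge> k \<longrightarrow> real (s_alpha G) < real (card (verts G)) / real c"
    using p1 c1 by blast
  define N where "N = nat \<lceil>2 * real k / e\<rceil> + 1"
  show "\<exists>no. \<forall>n\<ge>no. norm (real (s_alpha_class \<G> n) / real n - 0) < e"
  proof (intro exI allI impI)
    fix n assume n: "n \<ge> N"
    have npos: "n > 0" using n unfolding N_def by simp
    have nk: "real n > 2 * real k / e" using n unfolding N_def by linarith
    have bnd: "s_alpha G \<le> k + n div c" if "G \<in> \<G>" "card (verts G) \<le> n" for G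
    proof (cases "card (verts G) \<ge> k")
      case True
      then have "real (s_alpha G) < real (card (verts G)) / real c" using hk that by blast
      also have "\<dots> \<le> real n / real c" using that(2) by (simp add: divide_right_mono)
      finally have "real (s_alpha G) * real c < real n" using c1 by (simp add: pos_less_divide_eq)
      then have "s_alpha G * c < n" by (metis of_nat_less_iff of_nat_mult)
      then have "s_alpha G \<le> n div c" using c1 by (simp add: less_eq_div_iff_mult_less_eq)
      then show ?thesis by simp
    next
      case False
      have "s_alpha G \<le> card (verts G)" using s_alpha_le_card graphs that by blast
      then show ?thesis using False by simp
    qed
    have "s_alpha_class \<G> n \<le> k + n div c"
      unfolding s_alpha_class_def
    proof (cases "{s_alpha G | G. G \<in> \<G> \<and> card (verts G) \<le> n} = {}")
      case True then show "Sup {s_alpha G | G. G \<in> \<G> \<and> card (verts G) \<le> n} \<le> k + n div c"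
        by (simp only: Sup_nat_empty)
    next
      case False
      show "Sup {s_alpha G | G. G \<in> \<G> \<and> card (verts G) \<le> n} \<le> k + n div c"
        by (rule cSup_least[OF False]) (use bnd in blast)
    qed
    then have "real (s_alpha_class \<G> n) \<le> real k + real (n div c)" by simp
    also have "real (n div c) \<le> real n / real c"
    proof -
      have "n div c * c \<le> n" by simp
      then have "real (n div c) * real c \<le> real n" by (metis of_nat_le_iff of_nat_mult)
      then show ?thesis using c1 by (simp add: pos_le_divide_eq)
    qed
    finally have s1: "real (s_alpha_class \<G> n) / real n \<le> (real k + real n / real c) / real n"
      using npos by (simp add: divide_right_mono)
    have s2: "(real k + real n / real c) / real n = real k / real n + 1 / real c"
      using npos by (simp add: add_divide_distrib)
    have "real k / real n < e / 2"
      using nk npos e by (simp add: divide_less_eq pos_divide_less_eq mult.commute) 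
    then have lt: "real (s_alpha_class \<G> n) / real n < e" using s1 s2 ce by linarith
    have "real (s_alpha_class \<G> n) / real n \<ge> 0" by simp
    then show "norm (real (s_alpha_class \<G> n) / real n - 0) < e" using lt by simp
  qed
qed

theorem lemma5p4:
  fixes \<G> :: "'a graph set"
  assumes graphs: "\<forall>G\<in>\<G>. is_graph G"
    and frag: "frac_tree_alpha_fragile \<G>"
  shows "(\<forall>c::nat. c \<ge> 1 \<longrightarrow> (\<exists>k::nat. \<forall>G\<in>\<G>. card (verts G) \<ge> k \<longrightarrow>
            real (s_alpha G) < real (card (verts G)) / real c))
         \<and> sublinear_sep_alpha \<G>"
  using part1[OF graphs frag] part2[OF graphs part1[OF graphs frag]] by blast

end
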